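(* Let $S$ be an eventually regular semigroup with a primitive idempotent $e$. Then the ideal of $S$ generated by $e$ is completely simple (and $J_e$ is the minimum $\mathcal J$-class of $S$).
   Context: $S$ is eventually regular if for each $a\in S$ there are $n\ge1$, $b\in S$ with $a^nba^n=a^n$. An idempotent $e$ is primitive if for every idempotent $f$ with $ef=fe=f$ one has $f=e$. $J_e$ denotes the Green's $\mathcal J$-class of $e$. *)

theory Defs
  imports Main
begin

text \<open>The semigroup S is the whole carrier of a type of class semigroup_mult.\<close>

text \<open>Positive powers in a semigroup: spow a n = a to the power (n+1).\<close>
fun spow :: "'a::semigroup_mult \<Rightarrow> nat \<Rightarrow> 'a" where
  "spow a 0 = a"
| "spow a (Suc n) = spow a n * a"

definition eventually_regular :: "'a::semigroup_mult itself \<Rightarrow> bool" where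
  "eventually_regular _ \<longleftrightarrow>
     (\<forall>a::'a. \<exists>n::nat. \<exists>b. spow a n * b * spow a n = spow a n)"

definition idempotent :: "'a::semigroup_mult \<Rightarrow> bool" where
  "idempotent e \<longleftrightarrow> e * e = e"

text \<open>Primitive idempotent of a subsemigroup T (T = UNIV for S itself).\<close>
definition primitive_in :: "'a::semigroup_mult set \<Rightarrow> 'a \<Rightarrow> bool" where
  "primitive_in T e \<longleftrightarrow> e \<in> T \<and> idempotent e \<and>
     (\<forall>f\<in>T. idempotent f \<and> e * f = f \<and> f * e = f \<longrightarrow> f = e)"

definition principal_ideal :: "'a::semigroup_mult \<Rightarrow> 'a set" where
  "principal_ideal a = {x. x = a \<or> (\<exists>s. x = s * a) \<or> (\<exists>t. x = a * t) \<or> (\<exists>s t. x = s * a * t)}"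

definition J_rel :: "'a::semigroup_mult \<Rightarrow> 'a \<Rightarrow> bool" where
  "J_rel a b \<longleftrightarrow> principal_ideal a = principal_ideal b"

definition J_class :: "'a::semigroup_mult \<Rightarrow> 'a set" where
  "J_class a = {b. J_rel a b}"

definition J_le :: "'a::semigroup_mult set \<Rightarrow> 'a set \<Rightarrow> bool" where
  "J_le A B \<longleftrightarrow> (\<forall>a\<in>A. \<forall>b\<in>B. principal_ideal a \<subseteq> principal_ideal b)"

definition minimum_J_class :: "'a::semigroup_mult set \<Rightarrow> bool" where
  "minimum_J_class C \<longleftrightarrow> (\<exists>c. C = J_class c) \<and> (\<forall>a. J_le C (J_class a))"

definition subsemigroup :: "'a::semigroup_mult set \<Rightarrow> bool" where
  "subsemigroup T \<longleftrightarrow> (\<forall>x\<in>T. \<forall>y\<in>T. x * y \<in> T)"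

definition ideal_of :: "'a::semigroup_mult set \<Rightarrow> 'a set \<Rightarrow> bool" where
  "ideal_of T I \<longleftrightarrow> I \<noteq> {} \<and> I \<subseteq> T \<and>
     (\<forall>t\<in>T. \<forall>x\<in>I. t * x \<in> I \<and> x * t \<in> I)"

definition simple_semigroup :: "'a::semigroup_mult set \<Rightarrow> bool" where
  "simple_semigroup T \<longleftrightarrow> T \<noteq> {} \<and> subsemigroup T \<and> (\<forall>I. ideal_of T I \<longrightarrow> I = T)"

text \<open>Completely simple: simple and possessing a primitive idempotent (Howie).\<close>
definition completely_simple :: "'a::semigroup_mult set \<Rightarrow> bool" where
  "completely_simple T \<longleftrightarrow> simple_semigroup T \<and> (\<exists>e. primitive_in T e)"

end

theory Submission
  imports Defs
begin

lemma spow_split: "\<exists>w'. spow x n * w = x * w'"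
proof (induction n arbitrary: w)
  case 0 then show ?case by auto
next
  case (Suc n)
  obtain w' where "spow x n * (x * w) = x * w'" using Suc by blast
  then show ?case by (auto simp: mult.assoc)
qed

lemma spow_e: "e * e = e \<Longrightarrow> e * x = x \<Longrightarrow> x * e = x \<Longrightarrow> e * spow x n = spow x n \<and> spow x n * e = spow x n"
proof (induction n)
  case 0 then show ?case by simp
next
  case (Suc n) then show ?case by (simp add: mult.assoc[symmetric]) (metis mult.assoc)
qed

lemma pi_mem: "u * e * v \<in> principal_ideal e"
  unfolding principal_ideal_def by blast

lemma e_in_all:
  fixes e :: "'a::semigroup_mult"
  assumes er: "eventually_regular TYPE('a)"
    and pr: "primitive_in UNIV e"
  shows "e \<in> principal_ideal a"
proof -
  have ee: "e * e = e" using pr by (simp add: primitive_in_def idempotent_def)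
  define x where "x = e * a * e"
  have ex: "e * x = x" and xe: "x * e = x" using ee
    by (simp_all add: x_def mult.assoc[symmetric]) (simp add: mult.assoc)
  obtain n b where nb: "spow x n * b * spow x n = spow x n"
    using er unfolding eventually_regular_def by blast
  define c where "c = spow x n"
  have ec: "e * c = c" and ce: "c * e = c" using spow_e[OF ee ex xe] c_def by auto
  define b1 where "b1 = e * b * e"
  have cb1c: "c * b1 * c = c"
    using nb ec ce unfolding b1_def c_def[symmetric]
    by (metis mult.assoc)
  define f where "f = c * b1"
  have "f * f = f" unfolding f_def by (metis cb1c mult.assoc)
  moreover have "e * f = f" unfolding f_def by (metis ec mult.assoc)
  moreover have "f * e = f" unfolding f_def b1_def by (metis ee mult.assoc)
  ultimately have "f = e" using pr unfolding primitive_in_def idempotent_def by blast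
  obtain w where "spow x n * b1 = x * w" using spow_split by blast
  hence "e = e * a * (e * w)" using \<open>f = e\<close> unfolding f_def c_def x_def
    by (simp add: mult.assoc)
  thus ?thesis unfolding principal_ideal_def by blast
qed

lemma pi_ideal: "y \<in> principal_ideal e \<Longrightarrow> z \<in> principal_ideal y \<Longrightarrow> z \<in> principal_ideal e"
  unfolding principal_ideal_def
  by (elim disjE exE CollectE; simp; metis mult.assoc)

theorem lemma3p5:
  fixes e :: "'a::semigroup_mult"
  assumes "eventually_regular TYPE('a)"
    and "primitive_in UNIV e"
  shows "completely_simple (principal_ideal e) \<and> minimum_J_class (J_class e)"
proof
  have ee: "e * e = e" using assms(2) by (simp add: primitive_in_def idempotent_def)
  have all: "\<And>a. e \<in> principal_ideal a" using e_in_all assms by blast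
  have sub: "\<And>a. principal_ideal e \<subseteq> principal_ideal a"
    using all pi_ideal by blast
  show "minimum_J_class (J_class e)"
    unfolding minimum_J_class_def J_le_def J_class_def J_rel_def
    using sub by auto
  let ?T = "principal_ideal e"
  have eT: "e \<in> ?T" unfolding principal_ideal_def by blast
  have mulT: "\<And>x y. x \<in> ?T \<Longrightarrow> x * y \<in> ?T" "\<And>x y. x \<in> ?T \<Longrightarrow> y * x \<in> ?T"
  proof -
    fix x y assume "x \<in> ?T"
    have "x * y \<in> principal_ideal x" "y * x \<in> principal_ideal x" unfolding principal_ideal_def by blast+
    then show "x * y \<in> ?T" using pi_ideal \<open>x \<in> ?T\<close> by blast
  next
    fix x y assume "x \<in> ?T"
    have "y * x \<in> principal_ideal x" unfolding principal_ideal_def by blast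
    then show "y * x \<in> ?T" using pi_ideal \<open>x \<in> ?T\<close> by blast
  qed
  have rep: "\<And>y. y \<in> ?T \<Longrightarrow> \<exists>p\<in>?T. \<exists>q\<in>?T. y = p * e * q"
  proof -
    fix y assume "y \<in> ?T"
    then consider "y = e" | s where "y = s * e" | t where "y = e * t" | s t where "y = s * e * t"
      unfolding principal_ideal_def by blast
    then show "\<exists>p\<in>?T. \<exists>q\<in>?T. y = p * e * q"
    proof cases
      case 1 then show ?thesis using eT ee by (metis)
    next
      case (2 s) then show ?thesis using eT ee mulT by (metis mult.assoc)
    next
      case (3 t) then show ?thesis using eT ee mulT by (metis mult.assoc)
    next
      case (4 s t) then show ?thesis using eT ee mulT by (metis mult.assoc)
    qed
  qed
  have simple: "\<forall>I. ideal_of ?T I \<longrightarrow> I = ?T"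
  proof (intro allI impI)
    fix I assume I: "ideal_of ?T I"
    then obtain x where xI: "x \<in> I" and IT: "I \<subseteq> ?T"
      and cl: "\<And>t y. t \<in> ?T \<Longrightarrow> y \<in> I \<Longrightarrow> t * y \<in> I \<and> y * t \<in> I"
      unfolding ideal_of_def by blast
    have "e \<in> principal_ideal x" using all by blast
    then obtain p q where pq: "p \<in> ?T" "q \<in> ?T" "e = p * x * q"
    proof -
      assume H: "\<And>p q. p \<in> ?T \<Longrightarrow> q \<in> ?T \<Longrightarrow> e = p * x * q \<Longrightarrow> thesis"
      from \<open>e \<in> principal_ideal x\<close>
      consider "e = x" | s where "e = s * x" | t where "e = x * t" | s t where "e = s * x * t"
        unfolding principal_ideal_def by blast
      then show thesis
      proof cases
        case 1 then show ?thesis using H[of e e] eT ee by (metis mult.assoc)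
      next
        case (2 s) then show ?thesis using H[of "e * s" e] eT ee mulT by (metis mult.assoc)
      next
        case (3 t) then show ?thesis using H[of e "t * e"] eT ee mulT by (metis mult.assoc)
      next
        case (4 s t) then show ?thesis using H[of "e * s" "t * e"] eT ee mulT by (metis mult.assoc)
      qed
    qed
    have "e \<in> I" using pq cl xI by (metis mult.assoc)
    have "?T \<subseteq> I"
    proof
      fix y assume "y \<in> ?T"
      then obtain p q where "p \<in> ?T" "q \<in> ?T" "y = p * e * q" using rep by blast
      then show "y \<in> I" using cl \<open>e \<in> I\<close> by (metis mult.assoc)
    qed
    then show "I = ?T" using IT by blast
  qed
  show "completely_simple ?T"
    unfolding completely_simple_def simple_semigroup_def subsemigroup_def
  proof (intro conjI)
    show "?T \<noteq> {}" using eT by blast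
    show "\<forall>x\<in>?T. \<forall>y\<in>?T. x * y \<in> ?T" using mulT by blast
    show "\<forall>I. ideal_of ?T I \<longrightarrow> I = ?T" by (rule simple)
    show "\<exists>e'. primitive_in ?T e'"
      using assms(2) eT unfolding primitive_in_def by blast
  qed
qed

end
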